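(* Let $B$ be a finite skew brace and $X$ a sub-q-cycle set of $B$. Then the subgroup of $(B,+)$ generated by $X$ equals the subgroup of $(B,\circ)$ generated by $X$.
   Context: A skew brace is a triple $(B,+,\circ)$ where $(B,+)$ and $(B,\circ)$ are groups and $a\circ(b+c)=a\circ b-a+a\circ c$; $-a$, $a^-$ are additive and multiplicative inverses, $\lambda_a(b):=-a+a\circ b$, $\delta_a(b):=a\circ b-a$. $B$ is a q-cycle set via $a\cdot b:=\lambda_{a^-}(b)$, $a:b:=\delta_{a^-}(b)$. A q-cycle set is a non-empty set with operations $\cdot,:$ such that each $y\mapsto x\cdot y$ is bijective and $(x\cdot y)\cdot(x\cdot z)=(y:x)\cdot(y\cdot z)$, $(x:y):(x:z)=(y\cdot x):(y:z)$, $(x\cdot y):(x\cdot z)=(y:x)\cdot(y:z)$; a sub-q-cycle set is a subset that is a q-cycle set under the restricted operations. *)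

theory Defs
  imports "HOL-Algebra.Algebra"
begin

(* A skew brace on a common carrier: A is the additive group (B,+), written
  multiplicatively in HOL-Algebra (so a + b is a \<otimes>\<^bsub>A\<^esub> b, -a is inv\<^bsub>A\<^esub> a),
  and M is the multiplicative group (B,\<circ>). *)
definition skew_brace :: "'a monoid \<Rightarrow> 'a monoid \<Rightarrow> bool" where
  "skew_brace A M \<longleftrightarrow> group A \<and> group M \<and> carrier A = carrier M \<and>
     (\<forall>a\<in>carrier M. \<forall>b\<in>carrier M. \<forall>c\<in>carrier M.
        a \<otimes>\<^bsub>M\<^esub> (b \<otimes>\<^bsub>A\<^esub> c)
          = ((a \<otimes>\<^bsub>M\<^esub> b) \<otimes>\<^bsub>A\<^esub> inv\<^bsub>A\<^esub> a) \<otimes>\<^bsub>A\<^esub> (a \<otimes>\<^bsub>M\<^esub> c))"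

definition brace_lambda :: "'a monoid \<Rightarrow> 'a monoid \<Rightarrow> 'a \<Rightarrow> 'a \<Rightarrow> 'a" where
  "brace_lambda A M a b = inv\<^bsub>A\<^esub> a \<otimes>\<^bsub>A\<^esub> (a \<otimes>\<^bsub>M\<^esub> b)"

definition brace_delta :: "'a monoid \<Rightarrow> 'a monoid \<Rightarrow> 'a \<Rightarrow> 'a \<Rightarrow> 'a" where
  "brace_delta A M a b = (a \<otimes>\<^bsub>M\<^esub> b) \<otimes>\<^bsub>A\<^esub> inv\<^bsub>A\<^esub> a"

definition qdot :: "'a monoid \<Rightarrow> 'a monoid \<Rightarrow> 'a \<Rightarrow> 'a \<Rightarrow> 'a" where
  "qdot A M a b = brace_lambda A M (inv\<^bsub>M\<^esub> a) b"

definition qcolon :: "'a monoid \<Rightarrow> 'a monoid \<Rightarrow> 'a \<Rightarrow> 'a \<Rightarrow> 'a" where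
  "qcolon A M a b = brace_delta A M (inv\<^bsub>M\<^esub> a) b"

definition q_cycle_set :: "'a set \<Rightarrow> ('a \<Rightarrow> 'a \<Rightarrow> 'a) \<Rightarrow> ('a \<Rightarrow> 'a \<Rightarrow> 'a) \<Rightarrow> bool" where
  "q_cycle_set Y op1 op2 \<longleftrightarrow> (\<exists>x. x \<in> Y) \<and>
     (\<forall>x\<in>Y. \<forall>y\<in>Y. op1 x y \<in> Y \<and> op2 x y \<in> Y) \<and>
     (\<forall>x\<in>Y. bij_betw (op1 x) Y Y) \<and>
     (\<forall>x\<in>Y. \<forall>y\<in>Y. \<forall>z\<in>Y.
        op1 (op1 x y) (op1 x z) = op1 (op2 y x) (op1 y z) \<and>
        op2 (op2 x y) (op2 x z) = op2 (op1 y x) (op2 y z) \<and>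
        op2 (op1 x y) (op1 x z) = op1 (op2 y x) (op2 y z))"

definition sub_q_cycle_set :: "'a monoid \<Rightarrow> 'a monoid \<Rightarrow> 'a set \<Rightarrow> bool" where
  "sub_q_cycle_set A M Y \<longleftrightarrow> Y \<subseteq> carrier M \<and> q_cycle_set Y (qdot A M) (qcolon A M)"

end

theory Submission
  imports Defs
begin

locale sbr = A: group A + M: group M for A :: "'a monoid" and M :: "'a monoid" +
  assumes car: "carrier A = carrier M"
  and ax: "\<lbrakk>a \<in> carrier M; b \<in> carrier M; c \<in> carrier M\<rbrakk> \<Longrightarrow>
     a \<otimes>\<^bsub>M\<^esub> (b \<otimes>\<^bsub>A\<^esub> c) = ((a \<otimes>\<^bsub>M\<^esub> b) \<otimes>\<^bsub>A\<^esub> inv\<^bsub>A\<^esub> a) \<otimes>\<^bsub>A\<^esub> (a \<otimes>\<^bsub>M\<^esub> c)"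
begin

lemma mul_oneA: assumes a: "a \<in> carrier M" shows "a \<otimes>\<^bsub>M\<^esub> \<one>\<^bsub>A\<^esub> = a"
proof -
  have o: "\<one>\<^bsub>A\<^esub> \<in> carrier M" using car by auto
  define x where "x = a \<otimes>\<^bsub>M\<^esub> \<one>\<^bsub>A\<^esub>"
  have x: "x \<in> carrier A" using x_def a o car by auto
  have aA: "a \<in> carrier A" using a car by auto
  have "x = (x \<otimes>\<^bsub>A\<^esub> inv\<^bsub>A\<^esub> a) \<otimes>\<^bsub>A\<^esub> x"
    using ax[OF a o o] unfolding x_def by simp
  hence "\<one>\<^bsub>A\<^esub> \<otimes>\<^bsub>A\<^esub> x = (x \<otimes>\<^bsub>A\<^esub> inv\<^bsub>A\<^esub> a) \<otimes>\<^bsub>A\<^esub> x" using x by simp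
  hence "\<one>\<^bsub>A\<^esub> = x \<otimes>\<^bsub>A\<^esub> inv\<^bsub>A\<^esub> a" using x aA A.r_cancel
    by (metis A.inv_closed A.m_closed A.one_closed)
  thus ?thesis using x aA unfolding x_def[symmetric]
    by (metis A.inv_equality A.inv_inv A.inv_closed A.r_inv A.inv_comm)
qed

lemma one_eq: "\<one>\<^bsub>A\<^esub> = \<one>\<^bsub>M\<^esub>"
  using mul_oneA[of "\<one>\<^bsub>M\<^esub>"] car by (metis A.one_closed M.l_one M.one_closed)

declare car[simp]

lemma cl[simp]: "x \<in> carrier M \<Longrightarrow> inv\<^bsub>A\<^esub> x \<in> carrier M"
  "x \<in> carrier M \<Longrightarrow> y \<in> carrier M \<Longrightarrow> x \<otimes>\<^bsub>A\<^esub> y \<in> carrier M"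
  "\<one>\<^bsub>A\<^esub> \<in> carrier M"
  using A.inv_closed A.m_closed A.one_closed car by auto

lemma invA_cancel[simp]: "x \<in> carrier M \<Longrightarrow> y \<in> carrier M \<Longrightarrow> inv\<^bsub>A\<^esub> x \<otimes>\<^bsub>A\<^esub> (x \<otimes>\<^bsub>A\<^esub> y) = y"
  "x \<in> carrier M \<Longrightarrow> y \<in> carrier M \<Longrightarrow> x \<otimes>\<^bsub>A\<^esub> (inv\<^bsub>A\<^esub> x \<otimes>\<^bsub>A\<^esub> y) = y"
  by (simp_all add: A.m_assoc[symmetric])

abbreviation L where "L \<equiv> brace_lambda A M"

lemma lam_closed[simp]: "a \<in> carrier M \<Longrightarrow> b \<in> carrier M \<Longrightarrow> L a b \<in> carrier M"
  unfolding brace_lambda_def by (metis A.inv_closed A.m_closed M.m_closed car)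

lemma mul_eq: "a \<in> carrier M \<Longrightarrow> b \<in> carrier M \<Longrightarrow> a \<otimes>\<^bsub>M\<^esub> b = a \<otimes>\<^bsub>A\<^esub> L a b"
  unfolding brace_lambda_def
  by (metis A.inv_closed A.l_one A.m_assoc A.r_inv M.m_closed car)

lemma lam_add: "a \<in> carrier M \<Longrightarrow> b \<in> carrier M \<Longrightarrow> c \<in> carrier M \<Longrightarrow>
   L a (b \<otimes>\<^bsub>A\<^esub> c) = L a b \<otimes>\<^bsub>A\<^esub> L a c"
  unfolding brace_lambda_def using ax[of a b c] by (simp add: A.m_assoc)

lemma mul_invA: assumes a: "a \<in> carrier M" and b: "b \<in> carrier M"
  shows "a \<otimes>\<^bsub>M\<^esub> inv\<^bsub>A\<^esub> b = (a \<otimes>\<^bsub>A\<^esub> inv\<^bsub>A\<^esub> (a \<otimes>\<^bsub>M\<^esub> b)) \<otimes>\<^bsub>A\<^esub> a"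
proof -
  have "a = ((a \<otimes>\<^bsub>M\<^esub> b) \<otimes>\<^bsub>A\<^esub> inv\<^bsub>A\<^esub> a) \<otimes>\<^bsub>A\<^esub> (a \<otimes>\<^bsub>M\<^esub> inv\<^bsub>A\<^esub> b)"
    using ax[of a b "inv\<^bsub>A\<^esub> b"] a b mul_oneA[OF a] by simp
  then show ?thesis using a b
    by (metis A.inv_closed A.inv_mult_group A.inv_solve_left A.m_closed A.inv_inv M.m_closed car)
qed

lemma lam_comp: assumes a: "a \<in> carrier M" and b: "b \<in> carrier M" and c: "c \<in> carrier M"
  shows "L (a \<otimes>\<^bsub>M\<^esub> b) c = L a (L b c)"
proof -
  have "L a (L b c) = inv\<^bsub>A\<^esub> a \<otimes>\<^bsub>A\<^esub> (((a \<otimes>\<^bsub>M\<^esub> inv\<^bsub>A\<^esub> b) \<otimes>\<^bsub>A\<^esub> inv\<^bsub>A\<^esub> a) \<otimes>\<^bsub>A\<^esub> (a \<otimes>\<^bsub>M\<^esub> (b \<otimes>\<^bsub>M\<^esub> c)))"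
    unfolding brace_lambda_def using ax[of a "inv\<^bsub>A\<^esub> b" "b \<otimes>\<^bsub>M\<^esub> c"] a b c by simp
  also have "\<dots> = inv\<^bsub>A\<^esub> (a \<otimes>\<^bsub>M\<^esub> b) \<otimes>\<^bsub>A\<^esub> (a \<otimes>\<^bsub>M\<^esub> b \<otimes>\<^bsub>M\<^esub> c)"
    using a b c by (simp add: mul_invA A.m_assoc M.m_assoc A.inv_mult_group)
  finally show ?thesis unfolding brace_lambda_def by simp
qed

lemma lam_one[simp]: "c \<in> carrier M \<Longrightarrow> L \<one>\<^bsub>M\<^esub> c = c"
  unfolding brace_lambda_def using one_eq[symmetric] by simp

lemma lam_zero[simp]: "a \<in> carrier M \<Longrightarrow> L a \<one>\<^bsub>A\<^esub> = \<one>\<^bsub>A\<^esub>"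
  unfolding brace_lambda_def using mul_oneA by simp

lemma lam_inv: assumes a: "a \<in> carrier M" and b: "b \<in> carrier M"
  shows "L a (inv\<^bsub>A\<^esub> b) = inv\<^bsub>A\<^esub> (L a b)"
proof -
  have "L a b \<otimes>\<^bsub>A\<^esub> L a (inv\<^bsub>A\<^esub> b) = \<one>\<^bsub>A\<^esub>"
    using lam_add[of a b "inv\<^bsub>A\<^esub> b"] a b by simp
  thus ?thesis using a b by (metis A.inv_closed A.inv_equality A.inv_inv A.l_inv A.m_assoc A.l_one A.one_closed lam_closed car A.r_one)
qed

lemma lam_cancel1: "a \<in> carrier M \<Longrightarrow> b \<in> carrier M \<Longrightarrow> L a (L (inv\<^bsub>M\<^esub> a) b) = b"
  by (simp add: lam_comp[symmetric])

lemma lam_cancel2: "a \<in> carrier M \<Longrightarrow> b \<in> carrier M \<Longrightarrow> L (inv\<^bsub>M\<^esub> a) (L a b) = b"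
  by (simp add: lam_comp[symmetric])

lemma mul_lam_inv: "a \<in> carrier M \<Longrightarrow> b \<in> carrier M \<Longrightarrow> a \<otimes>\<^bsub>M\<^esub> L (inv\<^bsub>M\<^esub> a) b = a \<otimes>\<^bsub>A\<^esub> b"
  by (simp add: mul_eq lam_cancel1)

end

locale sbrY = sbr +
  fixes Y
  assumes Ysub: "Y \<subseteq> carrier M"
  and fin: "finite (carrier M)"
  and Ycl: "\<And>x y. x \<in> Y \<Longrightarrow> y \<in> Y \<Longrightarrow> L (inv\<^bsub>M\<^esub> x) y \<in> Y"
  and Ybij: "\<And>x. x \<in> Y \<Longrightarrow> bij_betw (L (inv\<^bsub>M\<^esub> x)) Y Y"
begin

lemma Yc[simp]: "y \<in> Y \<Longrightarrow> y \<in> carrier M" using Ysub by auto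

lemma lamY: assumes x: "x \<in> Y" and y: "y \<in> Y" shows "L x y \<in> Y"
proof -
  from Ybij[OF x] y obtain z where z: "z \<in> Y" "y = L (inv\<^bsub>M\<^esub> x) z"
    unfolding bij_betw_def by auto
  then show ?thesis using x lam_cancel1[of x z] by simp
qed

lemma GMc: "g \<in> generate M Y \<Longrightarrow> g \<in> carrier M"
  using M.generate_in_carrier Ysub by blast

lemma GAc: "g \<in> generate A Y \<Longrightarrow> g \<in> carrier M"
  using A.generate_in_carrier Ysub car by blast

lemma gen_lam: "g \<in> generate M Y \<Longrightarrow> y \<in> Y \<Longrightarrow> L g y \<in> Y"
proof (induction g arbitrary: y rule: generate.induct)
  case one
  then show ?case by simp
next
  case (incl h)
  then show ?case using lamY by blast
next
  case (inv h)
  then show ?case using Ycl by blast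
next
  case (eng h1 h2)
  then show ?case using lam_comp[of h1 h2 y] GMc by simp
qed

lemma P2: "h \<in> generate A Y \<Longrightarrow> g \<in> generate M Y \<Longrightarrow> L g h \<in> generate A Y"
proof (induction h rule: generate.induct)
  case one
  have gc: "g \<in> carrier M" using GMc[OF one] .
  show ?case unfolding lam_zero[OF gc] by (rule generate.one)
next
  case (incl h)
  have "L g h \<in> Y" by (rule gen_lam[OF incl.prems incl.hyps])
  then show ?case by (rule generate.incl)
next
  case (inv h)
  have gc: "g \<in> carrier M" using GMc[OF inv.prems] .
  have hc: "h \<in> carrier M" using Yc[OF inv.hyps] .
  have "L g h \<in> Y" by (rule gen_lam[OF inv.prems inv.hyps])
  then have "inv\<^bsub>A\<^esub> (L g h) \<in> generate A Y" by (rule generate.inv)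
  then show ?case unfolding lam_inv[OF gc hc] .
next
  case (eng h1 h2)
  have gc: "g \<in> carrier M" using GMc[OF eng.prems] .
  have hc: "h1 \<in> carrier M" "h2 \<in> carrier M" using GAc[OF eng.hyps(1)] GAc[OF eng.hyps(2)] by auto
  have "L g h1 \<otimes>\<^bsub>A\<^esub> L g h2 \<in> generate A Y"
    by (rule generate.eng[OF eng.IH(1)[OF eng.prems] eng.IH(2)[OF eng.prems]])
  then show ?case unfolding lam_add[OF gc hc] .
qed

lemma P3: "g \<in> generate M Y \<Longrightarrow> g \<in> generate A Y"
proof (induction g rule: generate.induct)
  case one
  show ?case unfolding one_eq[symmetric] by (rule generate.one)
next
  case (incl h)
  then show ?case by (rule generate.incl)
next
  case (inv h)
  have hc: "h \<in> carrier M" using Yc[OF inv] .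
  have e: "inv\<^bsub>M\<^esub> h = L (inv\<^bsub>M\<^esub> h) (inv\<^bsub>A\<^esub> h)"
  proof -
    have "L (inv\<^bsub>M\<^esub> h) h = inv\<^bsub>A\<^esub> (inv\<^bsub>M\<^esub> h)"
      unfolding brace_lambda_def using hc one_eq by simp
    then show ?thesis using lam_inv[of "inv\<^bsub>M\<^esub> h" h] hc by simp
  qed
  have a: "inv\<^bsub>A\<^esub> h \<in> generate A Y" by (rule generate.inv[OF inv])
  have b: "inv\<^bsub>M\<^esub> h \<in> generate M Y" by (rule generate.inv[OF inv])
  have "L (inv\<^bsub>M\<^esub> h) (inv\<^bsub>A\<^esub> h) \<in> generate A Y" by (rule P2[OF a b])
  then show ?case by (simp only: e[symmetric])
next
  case (eng h1 h2)
  have c: "h1 \<in> carrier M" "h2 \<in> carrier M" using GMc[OF eng.hyps(1)] GMc[OF eng.hyps(2)] by auto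
  have "h1 \<otimes>\<^bsub>A\<^esub> L h1 h2 \<in> generate A Y"
    by (rule generate.eng[OF eng.IH(1) P2[OF eng.IH(2) eng.hyps(1)]])
  then show ?case unfolding mul_eq[OF c] .
qed

lemma stepY: assumes g: "g \<in> generate M Y" and y: "y \<in> Y"
  shows "g \<otimes>\<^bsub>A\<^esub> y \<in> generate M Y"
proof -
  have gc: "g \<in> carrier M" using GMc[OF g] .
  have "inv\<^bsub>M\<^esub> g \<in> generate M Y" using M.generate_m_inv_closed[OF Ysub g] .
  hence "L (inv\<^bsub>M\<^esub> g) y \<in> Y" using gen_lam y by simp
  hence "g \<otimes>\<^bsub>M\<^esub> L (inv\<^bsub>M\<^esub> g) y \<in> generate M Y" by (rule generate.eng[OF g generate.incl])
  thus ?thesis unfolding mul_lam_inv[OF gc Yc[OF y]] .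
qed

lemma negY: assumes y: "y \<in> Y" shows "inv\<^bsub>A\<^esub> y \<in> generate M Y"
proof -
  let ?G = "generate M Y"
  let ?f = "\<lambda>g. g \<otimes>\<^bsub>A\<^esub> y"
  have sub: "?f ` ?G \<subseteq> ?G"
    using stepY[OF _ y] by auto
  have yc: "y \<in> carrier M" using Yc[OF y] .
  have inj: "inj_on ?f ?G"
  proof (rule inj_onI)
    fix a b assume "a \<in> ?G" "b \<in> ?G" "a \<otimes>\<^bsub>A\<^esub> y = b \<otimes>\<^bsub>A\<^esub> y"
    then show "a = b" using A.right_cancel[of y a b] GMc yc by simp
  qed
  have fin2: "finite ?G" using fin GMc by (meson rev_finite_subset subsetI)
  have "?f ` ?G = ?G" using endo_inj_surj[OF fin2 sub inj] .
  moreover have "\<one>\<^bsub>M\<^esub> \<in> ?G" by (rule generate.one)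
  ultimately have "\<one>\<^bsub>M\<^esub> \<in> ?f ` ?G" by simp
  then obtain g where g: "g \<in> ?G" "\<one>\<^bsub>A\<^esub> = g \<otimes>\<^bsub>A\<^esub> y" unfolding one_eq by blast
  have gc: "g \<in> carrier M" using GMc[OF g(1)] .
  have "g = inv\<^bsub>A\<^esub> y"
    using A.inv_equality[of g y] g(2) gc yc by simp
  thus ?thesis using g by simp
qed

lemma P4: "h \<in> generate A Y \<Longrightarrow> g \<in> generate M Y \<Longrightarrow> g \<otimes>\<^bsub>A\<^esub> h \<in> generate M Y"
proof (induction h arbitrary: g rule: generate.induct)
  case one
  then show ?case using GMc[OF one] by simp
next
  case (incl y)
  show ?case by (rule stepY[OF incl.prems incl.hyps])
next
  case (inv y)
  have gc: "g \<in> carrier M" using GMc[OF inv.prems] .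
  have yc: "y \<in> carrier M" using Yc[OF inv.hyps] .
  have "inv\<^bsub>M\<^esub> g \<in> generate M Y" using M.generate_m_inv_closed[OF Ysub inv.prems] .
  hence "L (inv\<^bsub>M\<^esub> g) y \<in> Y" using gen_lam inv.hyps by simp
  hence "inv\<^bsub>A\<^esub> (L (inv\<^bsub>M\<^esub> g) y) \<in> generate M Y" by (rule negY)
  hence "g \<otimes>\<^bsub>M\<^esub> inv\<^bsub>A\<^esub> (L (inv\<^bsub>M\<^esub> g) y) \<in> generate M Y"
    by (rule generate.eng[OF inv.prems])
  hence "g \<otimes>\<^bsub>M\<^esub> L (inv\<^bsub>M\<^esub> g) (inv\<^bsub>A\<^esub> y) \<in> generate M Y"
    using lam_inv[of "inv\<^bsub>M\<^esub> g" y] gc yc by simp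
  thus ?case using mul_lam_inv[of g "inv\<^bsub>A\<^esub> y"] gc yc by simp
next
  case (eng h1 h2)
  have c: "g \<in> carrier M" "h1 \<in> carrier M" "h2 \<in> carrier M"
    using GMc[OF eng.prems] GAc[OF eng.hyps(1)] GAc[OF eng.hyps(2)] by auto
  have "(g \<otimes>\<^bsub>A\<^esub> h1) \<otimes>\<^bsub>A\<^esub> h2 \<in> generate M Y"
    by (rule eng.IH(2)[OF eng.IH(1)[OF eng.prems]])
  then show ?case using A.m_assoc[of g h1 h2] c by simp
qed

lemma main: "generate A Y = generate M Y"
proof
  show "generate M Y \<subseteq> generate A Y" using P3 by (rule subsetI)
  show "generate A Y \<subseteq> generate M Y"
  proof
    fix h assume h: "h \<in> generate A Y"
    have "\<one>\<^bsub>M\<^esub> \<otimes>\<^bsub>A\<^esub> h \<in> generate M Y" by (rule P4[OF h generate.one])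
    thus "h \<in> generate M Y" using GAc[OF h] one_eq[symmetric] by simp
  qed
qed

end

theorem mainTheorem18:
  fixes A M :: "'a monoid" and Y :: "'a set"
  assumes "skew_brace A M"
    and "finite (carrier M)"
    and "sub_q_cycle_set A M Y"
  shows "generate A Y = generate M Y"
proof -
  have sb: "group A" "group M" "carrier A = carrier M"
    "\<And>a b c. \<lbrakk>a \<in> carrier M; b \<in> carrier M; c \<in> carrier M\<rbrakk> \<Longrightarrow>
     a \<otimes>\<^bsub>M\<^esub> (b \<otimes>\<^bsub>A\<^esub> c) = ((a \<otimes>\<^bsub>M\<^esub> b) \<otimes>\<^bsub>A\<^esub> inv\<^bsub>A\<^esub> a) \<otimes>\<^bsub>A\<^esub> (a \<otimes>\<^bsub>M\<^esub> c)"
  proof -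
    have h: "group A \<and> group M \<and> carrier A = carrier M \<and>
     (\<forall>a\<in>carrier M. \<forall>b\<in>carrier M. \<forall>c\<in>carrier M.
        a \<otimes>\<^bsub>M\<^esub> (b \<otimes>\<^bsub>A\<^esub> c)
          = ((a \<otimes>\<^bsub>M\<^esub> b) \<otimes>\<^bsub>A\<^esub> inv\<^bsub>A\<^esub> a) \<otimes>\<^bsub>A\<^esub> (a \<otimes>\<^bsub>M\<^esub> c))"
      using assms(1) unfolding skew_brace_def .
    then show "group A" "group M" "carrier A = carrier M" by (rule conjunct1, rule conjunct1[OF conjunct2], rule conjunct1[OF conjunct2[OF conjunct2]])
    fix a b c assume "a \<in> carrier M" "b \<in> carrier M" "c \<in> carrier M"
    then show "a \<otimes>\<^bsub>M\<^esub> (b \<otimes>\<^bsub>A\<^esub> c) = ((a \<otimes>\<^bsub>M\<^esub> b) \<otimes>\<^bsub>A\<^esub> inv\<^bsub>A\<^esub> a) \<otimes>\<^bsub>A\<^esub> (a \<otimes>\<^bsub>M\<^esub> c)"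
      using conjunct2[OF conjunct2[OF conjunct2[OF h]]] by simp
  qed
  have q: "Y \<subseteq> carrier M" "\<And>x y. x \<in> Y \<Longrightarrow> y \<in> Y \<Longrightarrow> brace_lambda A M (inv\<^bsub>M\<^esub> x) y \<in> Y"
    "\<And>x. x \<in> Y \<Longrightarrow> bij_betw (brace_lambda A M (inv\<^bsub>M\<^esub> x)) Y Y"
  proof -
    have h: "Y \<subseteq> carrier M" "\<forall>x\<in>Y. \<forall>y\<in>Y. qdot A M x y \<in> Y" "\<forall>x\<in>Y. bij_betw (qdot A M x) Y Y"
    proof -
      have "Y \<subseteq> carrier M \<and> q_cycle_set Y (qdot A M) (qcolon A M)"
        using assms(3) unfolding sub_q_cycle_set_def .
      then have a: "Y \<subseteq> carrier M" and b: "q_cycle_set Y (qdot A M) (qcolon A M)" by simp_all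
      have b': "(\<forall>x\<in>Y. \<forall>y\<in>Y. qdot A M x y \<in> Y \<and> qcolon A M x y \<in> Y) \<and> (\<forall>x\<in>Y. bij_betw (qdot A M x) Y Y)"
        using b unfolding q_cycle_set_def by (elim conjE) (intro conjI)
      show "Y \<subseteq> carrier M" by (rule a)
      show "\<forall>x\<in>Y. \<forall>y\<in>Y. qdot A M x y \<in> Y" using b' by simp
      show "\<forall>x\<in>Y. bij_betw (qdot A M x) Y Y" using b' by simp
    qed
    have e: "\<And>x. qdot A M x = brace_lambda A M (inv\<^bsub>M\<^esub> x)"
      by (rule ext) (simp only: qdot_def)
    show "Y \<subseteq> carrier M" using h(1) .
    show "\<And>x y. x \<in> Y \<Longrightarrow> y \<in> Y \<Longrightarrow> brace_lambda A M (inv\<^bsub>M\<^esub> x) y \<in> Y"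
      using h(2) unfolding e by blast
    show "\<And>x. x \<in> Y \<Longrightarrow> bij_betw (brace_lambda A M (inv\<^bsub>M\<^esub> x)) Y Y"
      using h(3) unfolding e by blast
  qed
  have s1: "sbr A M"
    by (rule sbr.intro[OF sb(1) sb(2)], rule sbr_axioms.intro[OF sb(3) sb(4)])
  interpret sbrY A M Y
    by (rule sbrY.intro[OF s1], rule sbrY_axioms.intro[OF q(1) assms(2) q(2) q(3)])
  show ?thesis by (rule main)
qed

end
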